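(* Let $\ell\ge1$ and $V=\prod_{j=\ell,\dots,2,1}(c_1x^jy^jc_2)^2$. Suppose $C$ is an accepting computation of $V$ that does not completely match the first occurrence of the subword $v_\ell=c_1x^\ell y^\ell c_2$ of $V$ with the second occurrence of $v_\ell$ (i.e., at least one symbol of the second occurrence of $v_\ell$ is pushed onto the queue). Then at some point during $C$ the queue contains two full $x$-blocks or two full $y$-blocks.
   Context: Queue automaton: a configuration is written $Q\,\|\,x$ ($Q$ = queue contents, $x$ = remaining input); a step from $Q\,\|\,\sigma x$ ($\sigma$ a symbol) goes either to $Q\sigma\,\|\,x$ (push the input symbol) or, if $Q=\sigma Q'$, to $Q'\,\|\,x$ (the input symbol is matched against the leftmost queue symbol, which is popped; that queue symbol was pushed from an earlier input position and the two occurrences are said to be matched). An accepting computation of $w$ is a computation $\varepsilon\,\|\,w\vdash^*\varepsilon\,\|\,\varepsilon$ ($\varepsilon$ the empty string). Here $c_1,c_2,x,y$ are four distinct symbols and $V=v_\ell v_\ell v_{\ell-1}v_{\ell-1}\cdots v_1v_1$ with $v_j=c_1x^jy^jc_2$. Each displayed subword $x^j$ of $V$ is an $x$-block and each displayed $y^j$ a $y$-block. At a given point of a computation, the queue contains a full $x$-block (resp. $y$-block) if the entire block $x^j$ (resp. $y^j$) of $V$ has been pushed onto the queue, with none of its symbols matched when read, and none of its symbols has yet been popped. *)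

theory Defs
  imports Main
begin

datatype sym = C1 | C2 | X | Y

text \<open>A computation of the queue automaton on input w is determined by the
sequence of step choices ds (True = push the current input symbol,
False = match it against the leftmost queue symbol and pop that).
We track the queue as the list of input positions whose symbols it holds
(the queue contents as a word is  map (\<lambda>i. w ! i) (qstate w ds k) ).
qstate w ds k is the queue after the first k steps.\<close>
fun qstate :: "'a list \<Rightarrow> bool list \<Rightarrow> nat \<Rightarrow> nat list" where
  "qstate w ds 0 = []"
| "qstate w ds (Suc k) =
     (if ds ! k then qstate w ds k @ [k] else tl (qstate w ds k))"

definition accepting :: "'a list \<Rightarrow> bool list \<Rightarrow> bool" where
  "accepting w ds \<longleftrightarrow>
     length ds = length w
     \<and> (\<forall>k < length w. \<not> ds ! k \<longrightarrow>
          qstate w ds k \<noteq> [] \<and> w ! hd (qstate w ds k) = w ! k)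
     \<and> qstate w ds (length w) = []"

definition vblk :: "nat \<Rightarrow> sym list" where
  "vblk j = [C1] @ replicate j X @ replicate j Y @ [C2]"

definition factors :: "nat \<Rightarrow> sym list list" where
  "factors l = map (\<lambda>m. vblk (l - m div 2)) [0..<2*l]"

definition Vword :: "nat \<Rightarrow> sym list" where
  "Vword l = concat (factors l)"

definition fstart :: "nat \<Rightarrow> nat \<Rightarrow> nat" where
  "fstart l m = length (concat (take m (factors l)))"

definition xblock :: "nat \<Rightarrow> nat \<Rightarrow> nat set" where
  "xblock l m = {fstart l m + 1 ..< fstart l m + 1 + (l - m div 2)}"

definition yblock :: "nat \<Rightarrow> nat \<Rightarrow> nat set" where
  "yblock l m = {fstart l m + 1 + (l - m div 2) ..< fstart l m + 1 + 2 * (l - m div 2)}"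

end

theory Submission imports Defs begin

lemma len_vblk[simp]: "length (vblk j) = 2*j+2" by (simp add: vblk_def)

lemma vblk_nth: "i < 2*j+2 \<Longrightarrow> vblk j ! i = (if i = 0 then C1 else if i \<le> j then X else if i \<le> 2*j then Y else C2)"
  by (auto simp: vblk_def nth_append nth_Cons')

lemma factors_nth: "i < 2*l \<Longrightarrow> factors l ! i = vblk (l - i div 2)"
  by (simp add: factors_def)

lemma factors_Suc: "factors (Suc n) = vblk (Suc n) # vblk (Suc n) # factors n"
proof (rule nth_equalityI)
  show "length (factors (Suc n)) = length (vblk (Suc n) # vblk (Suc n) # factors n)"
    by (simp add: factors_def)
next
  fix i assume "i < length (factors (Suc n))"
  then have i: "i < 2 * Suc n" by (simp add: factors_def)
  show "factors (Suc n) ! i = (vblk (Suc n) # vblk (Suc n) # factors n) ! i"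
  proof (cases "i < 2")
    case True then show ?thesis using i by (auto simp: factors_nth less_2_cases_iff)
  next
    case False
    then obtain k where k: "i = Suc (Suc k)" by (metis add_2_eq_Suc le_Suc_ex not_less)
    then have "k < 2*n" using i by simp
    then show ?thesis using k i by (simp add: factors_nth)
  qed
qed

lemma Vword_Suc: "Vword (Suc n) = vblk (Suc n) @ vblk (Suc n) @ Vword n"
  by (simp add: Vword_def factors_Suc)

lemma wA: "1 \<le> l \<Longrightarrow> i < 2*l+2 \<Longrightarrow> Vword l ! i = vblk l ! i"
  by (cases l) (auto simp: Vword_Suc nth_append)

lemma wB: "1 \<le> l \<Longrightarrow> 2*l+2 \<le> i \<Longrightarrow> i < 4*l+4 \<Longrightarrow> Vword l ! i = vblk l ! (i-(2*l+2))"
  by (cases l) (auto simp: Vword_Suc nth_append)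

lemma wC: "2 \<le> l \<Longrightarrow> 4*l+4 \<le> i \<Longrightarrow> i < 6*l+4 \<Longrightarrow> Vword l ! i = vblk (l-1) ! (i-(4*l+4))"
proof -
  assume a: "2 \<le> l" "4*l+4 \<le> i" "i < 6*l+4"
  then obtain n where n: "l = Suc (Suc n)" by (metis add_2_eq_Suc le_Suc_ex)
  show ?thesis using a unfolding n by (auto simp: Vword_Suc nth_append intro!: arg_cong[where f="nth (vblk _)"])
qed

lemma wD: "2 \<le> l \<Longrightarrow> 6*l+4 \<le> i \<Longrightarrow> i < 8*l+4 \<Longrightarrow> Vword l ! i = vblk (l-1) ! (i-(6*l+4))"
proof -
  assume a: "2 \<le> l" "6*l+4 \<le> i" "i < 8*l+4"
  then obtain n where n: "l = Suc (Suc n)" by (metis add_2_eq_Suc le_Suc_ex)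
  show ?thesis using a unfolding n by (auto simp: Vword_Suc nth_append intro!: arg_cong[where f="nth (vblk _)"])
qed

lemma lenV1: "1 \<le> l \<Longrightarrow> 4*l+4 \<le> length (Vword l)"
  by (cases l) (auto simp: Vword_Suc)

lemma lenV2: "2 \<le> l \<Longrightarrow> 8*l+4 \<le> length (Vword l)"
proof -
  assume a: "2 \<le> l"
  then obtain n where n: "l = Suc (Suc n)" by (metis add_2_eq_Suc le_Suc_ex)
  show ?thesis unfolding n by (auto simp: Vword_Suc)
qed

lemma lenV_1: "length (Vword 1) = 8"
proof -
  have "Vword 0 = []" by (simp add: Vword_def factors_def)
  then show ?thesis using Vword_Suc[of 0] by simp
qed

lemma fstart0: "fstart l 0 = 0" by (simp add: fstart_def)
lemma fstart1: "1 \<le> l \<Longrightarrow> fstart l 1 = 2*l+2"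
  by (cases l) (auto simp: fstart_def factors_Suc)
lemma fstart2: "1 \<le> l \<Longrightarrow> fstart l 2 = 4*l+4"
  by (cases l) (auto simp: fstart_def factors_Suc numeral_2_eq_2)
lemma fstart3: "2 \<le> l \<Longrightarrow> fstart l 3 = 6*l+4"
proof -
  assume a: "2 \<le> l"
  then obtain n where n: "l = Suc (Suc n)" by (metis add_2_eq_Suc le_Suc_ex)
  show ?thesis unfolding n by (auto simp: fstart_def factors_Suc numeral_3_eq_3)
qed

lemma legal: "accepting w ds \<Longrightarrow> k < length w \<Longrightarrow> \<not> ds!k \<Longrightarrow> qstate w ds k \<noteq> [] \<and> w ! hd (qstate w ds k) = w ! k"
  by (simp add: accepting_def)

lemma front_stays:
  assumes acc: "accepting w ds" and q: "qstate w ds k = h # rest" and len: "k + n \<le> length w"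
    and ne: "\<And>i. k \<le> i \<Longrightarrow> i < k+n \<Longrightarrow> w!i \<noteq> w!h"
  shows "qstate w ds (k+n) = h # rest @ [k..<k+n]"
  using len ne
proof (induction n)
  case 0 then show ?case using q by simp
next
  case (Suc n)
  have IH: "qstate w ds (k+n) = h # rest @ [k..<k+n]" using Suc by auto
  have "ds!(k+n)"
  proof (rule ccontr)
    assume "\<not> ds!(k+n)"
    then have "w ! hd (qstate w ds (k+n)) = w!(k+n)" using legal[OF acc] Suc.prems by auto
    with IH Suc.prems(2)[of "k+n"] show False by simp
  qed
  then show ?case using IH by simp
qed

lemma phase:
  assumes q: "qstate w ds k0 = [p..<q]" and "t \<le> n" and "n < q - p"
  shows "\<exists>a \<le> t. qstate w ds (k0+t) = [p+a..<q] @ filter (\<lambda>i. ds!i) [k0..<k0+t]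
           \<and> a + length (filter (\<lambda>i. ds!i) [k0..<k0+t]) = t"
  using assms(2)
proof (induction t)
  case 0 show ?case using q by simp
next
  case (Suc t)
  then obtain a where a: "a \<le> t" "qstate w ds (k0+t) = [p+a..<q] @ filter (\<lambda>i. ds!i) [k0..<k0+t]"
    "a + length (filter (\<lambda>i. ds!i) [k0..<k0+t]) = t" by auto
  show ?case
  proof (cases "ds!(k0+t)")
    case True
    then show ?thesis using a by (intro exI[of _ a]) auto
  next
    case False
    have "p + a < q" using a Suc.prems assms(3) by linarith
    then have "tl ([p+a..<q] @ filter (\<lambda>i. ds!i) [k0..<k0+t]) = [p+Suc a..<q] @ filter (\<lambda>i. ds!i) [k0..<k0+t]"
      by (simp add: upt_conv_Cons)
    then show ?thesis using a False by (intro exI[of _ "Suc a"]) auto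
  qed
qed

lemma yphase:
  assumes acc: "accepting w ds" and q: "qstate w ds k0 = R1 @ [c] @ T" and c: "w!c \<noteq> Y"
    and len: "k0 + n \<le> length w" and ys: "\<And>i. k0 \<le> i \<Longrightarrow> i < k0+n \<Longrightarrow> w!i = Y" and t: "t \<le> n"
  shows "\<exists>R1' G. qstate w ds (k0+t) = R1' @ [c] @ T @ G \<and> set R1' \<subseteq> set R1"
  using t
proof (induction t)
  case 0 show ?case using q by (intro exI[of _ R1] exI[of _ "[]"]) simp
next
  case (Suc t)
  then obtain R1' G where a: "qstate w ds (k0+t) = R1' @ [c] @ T @ G" "set R1' \<subseteq> set R1" by auto
  show ?case
  proof (cases "ds!(k0+t)")
    case True
    then show ?thesis using a by (intro exI[of _ R1'] exI[of _ "G @ [k0+t]"]) auto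
  next
    case False
    have "w ! hd (qstate w ds (k0+t)) = w!(k0+t)" using legal[OF acc _ False] Suc.prems len by auto
    also have "\<dots> = Y" using ys Suc.prems by auto
    finally have "R1' \<noteq> []" using a c by auto
    then obtain r R'' where "R1' = r # R''" by (cases R1') auto
    then show ?thesis using a False by (intro exI[of _ R''] exI[of _ G]) auto
  qed
qed

lemma qs_step: "qstate w ds (Suc k) = (if ds!k then qstate w ds k @ [k] else tl (qstate w ds k))"
  by simp

lemma qs_step': "k' = Suc k \<Longrightarrow> qstate w ds k' = (if ds!k then qstate w ds k @ [k] else tl (qstate w ds k))"
  by simp

declare qstate.simps(2)[simp del]

theorem lemma11:
  fixes l :: nat and ds :: "bool list"
  assumes "l \<ge> 1"
    and "accepting (Vword l) ds"
    and "\<exists>i. length (vblk l) \<le> i \<and> i < 2 * length (vblk l) \<and> ds ! i"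
  shows "\<exists>k \<le> length (Vword l). \<exists>m1 < 2 * l. \<exists>m2 < 2 * l. m1 \<noteq> m2 \<and>
           ((xblock l m1 \<subseteq> set (qstate (Vword l) ds k) \<and> xblock l m2 \<subseteq> set (qstate (Vword l) ds k))
          \<or> (yblock l m1 \<subseteq> set (qstate (Vword l) ds k) \<and> yblock l m2 \<subseteq> set (qstate (Vword l) ds k)))"
proof -
  note l = assms(1) and acc = assms(2)
  define w where "w = Vword l"
  have acc': "accepting w ds" using acc w_def by simp
  have N1: "4*l+4 \<le> length w" using lenV1[OF l] w_def by simp
  have sA: "\<And>i. i < 2*l+2 \<Longrightarrow> w!i = (if i = 0 then C1 else if i \<le> l then X else if i \<le> 2*l then Y else C2)"
    using wA[OF l] vblk_nth w_def by simp
  have sB: "\<And>i. 2*l+2 \<le> i \<Longrightarrow> i < 4*l+4 \<Longrightarrow> w!i = (if i = 2*l+2 then C1 else if i \<le> 3*l+2 then X else if i \<le> 4*l+2 then Y else C2)"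
  proof -
    fix i assume i: "2*l+2 \<le> i" "i < 4*l+4"
    then have "w!i = vblk l ! (i-(2*l+2))" using wB[OF l] w_def by simp
    also have "\<dots> = (if i = 2*l+2 then C1 else if i \<le> 3*l+2 then X else if i \<le> 4*l+2 then Y else C2)"
      using i by (subst vblk_nth) auto
    finally show "w!i = (if i = 2*l+2 then C1 else if i \<le> 3*l+2 then X else if i \<le> 4*l+2 then Y else C2)" .
  qed
  have ds0: "ds!0"
  proof (rule ccontr)
    assume "\<not> ds!0"
    then show False using legal[OF acc', of 0] N1 by (cases w) auto
  qed
  have q1: "qstate w ds 1 = [0]" using ds0 qs_step[of w ds 0] by simp
  have "qstate w ds (1 + (2*l+1)) = 0 # [] @ [1..<1+(2*l+1)]"
    by (rule front_stays[OF acc' q1]) (use N1 sA in auto)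
  then have qL: "qstate w ds (2*l+2) = [0..<2*l+2]" by (simp add: upt_conv_Cons)
  have xb0: "xblock l 0 = {1..<1+l}" by (simp add: xblock_def fstart0)
  have xb1: "xblock l 1 = {2*l+3..<3*l+3}" unfolding xblock_def fstart1[OF l] by (simp add: eval_nat_numeral add.assoc)
  have yb0: "yblock l 0 = {1+l..<1+2*l}" by (simp add: yblock_def fstart0)
  have yb1: "yblock l 1 = {3*l+3..<4*l+3}" unfolding yblock_def fstart1[OF l] by (simp add: eval_nat_numeral add.assoc)
  have two: "(1::nat) < 2*l" "(0::nat) < 2*l" using l by auto
  show ?thesis
  proof (cases "ds!(2*l+2)")
    case True
    have "qstate w ds (2*l+3) = [0..<2*l+2] @ [2*l+2]" using qs_step'[of "2*l+3" "2*l+2" w ds] True qL by simp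
    then have qA: "qstate w ds (2*l+3) = 0 # ([1..<2*l+2] @ [2*l+2])" by (simp add: upt_conv_Cons)
    have "qstate w ds (2*l+3 + l) = 0 # ([1..<2*l+2] @ [2*l+2]) @ [2*l+3..<2*l+3+l]"
      by (rule front_stays[OF acc' qA]) (use N1 sA sB in auto)
    then have "xblock l 0 \<subseteq> set (qstate w ds (3*l+3)) \<and> xblock l 1 \<subseteq> set (qstate w ds (3*l+3))"
      unfolding xb0 xb1 by (auto simp: add.commute add.left_commute)
    then show ?thesis using two N1 unfolding w_def[symmetric]
      by (intro exI[of _ "3*l+3"] conjI exI[of _ 0] exI[of _ 1]) auto
  next
    case False
    have "qstate w ds (2*l+3) = tl [0..<2*l+2]" using qs_step'[of "2*l+3" "2*l+2" w ds] False qL by simp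
    then have qL1: "qstate w ds (2*l+3) = [1..<2*l+2]" by (simp add: upt_conv_Cons)
    obtain a where a: "a \<le> l" "qstate w ds (2*l+3+l) = [1+a..<2*l+2] @ filter (\<lambda>i. ds!i) [2*l+3..<2*l+3+l]"
        "a + length (filter (\<lambda>i. ds!i) [2*l+3..<2*l+3+l]) = l"
      using phase[OF qL1, of l l] by auto
    show ?thesis
    proof (cases "a < l")
      case True
      then have qB: "qstate w ds (3*l+3) = (1+a) # ([2+a..<2*l+2] @ filter (\<lambda>i. ds!i) [2*l+3..<2*l+3+l])"
        using a by (simp add: upt_conv_Cons add.commute add.left_commute)
      have "qstate w ds (3*l+3 + (l+1)) = (1+a) # ([2+a..<2*l+2] @ filter (\<lambda>i. ds!i) [2*l+3..<2*l+3+l]) @ [3*l+3..<3*l+3+(l+1)]"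
        by (rule front_stays[OF acc' qB]) (use N1 sA sB True in auto)
      then have "yblock l 0 \<subseteq> set (qstate w ds (4*l+4)) \<and> yblock l 1 \<subseteq> set (qstate w ds (4*l+4))"
        unfolding yb0 yb1 using True by (auto simp: add.commute add.left_commute)
      then show ?thesis using two N1 unfolding w_def[symmetric]
        by (intro exI[of _ "4*l+4"] conjI exI[of _ 0] exI[of _ 1]) auto
    next
      case False
      then have al: "a = l" using a by simp
      then have F0: "filter (\<lambda>i. ds!i) [2*l+3..<2*l+3+l] = []" using a by simp
      then have noX: "\<And>i. 2*l+3 \<le> i \<Longrightarrow> i < 3*l+3 \<Longrightarrow> \<not> ds!i"
        by (auto simp: filter_empty_conv)
      have qX: "qstate w ds (3*l+3) = [l+1..<2*l+2]" using a al F0 by (simp add: add.commute add.left_commute)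
      obtain b where b: "b \<le> l" "qstate w ds (3*l+3+l) = [l+1+b..<2*l+2] @ filter (\<lambda>i. ds!i) [3*l+3..<3*l+3+l]"
          "b + length (filter (\<lambda>i. ds!i) [3*l+3..<3*l+3+l]) = l"
        using phase[OF qX, of l l] by auto
      define F' where "F' = filter (\<lambda>i. ds!i) [3*l+3..<3*l+3+l]"
      have uc: "[l+1+b..<2*l+2] = (l+1+b) # [l+2+b..<2*l+2]" using b(1) by (simp add: upt_conv_Cons)
      have bq: "qstate w ds (4*l+3) = (l+1+b) # ([l+2+b..<2*l+2] @ F')"
        using b(2) unfolding uc F'_def by (simp add: add.commute add.left_commute)
      have pushC2: "ds!(4*l+3)"
      proof (rule ccontr)
        assume nd: "\<not> ds!(4*l+3)"
        have "w ! hd (qstate w ds (4*l+3)) = w!(4*l+3)" using legal[OF acc' _ nd] N1 by auto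
        moreover have "hd (qstate w ds (4*l+3)) = l+1+b" using bq by simp
        ultimately have "w!(l+1+b) = C2" using sB[of "4*l+3"] by simp
        then have "b = l" using sA[of "l+1+b"] b(1) by (auto split: if_splits)
        then have "filter (\<lambda>i. ds!i) [3*l+3..<3*l+3+l] = []" using b by simp
        then have noY: "\<And>i. 3*l+3 \<le> i \<Longrightarrow> i < 4*l+3 \<Longrightarrow> \<not> ds!i"
          by (auto simp: filter_empty_conv)
        obtain i where i: "2*l+2 \<le> i" "i < 4*l+4" "ds!i" using assms(3) by auto
        show False using i noX noY nd False \<open>\<not> ds!(2*l+2)\<close>
          by (cases "i = 2*l+2"; cases "i = 4*l+3"; cases "i < 3*l+3") auto
      qed
      then have qM: "qstate w ds (4*l+4) = [l+1+b..<2*l+2] @ F' @ [4*l+3]"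
        using b qs_step'[of "4*l+4" "4*l+3" w ds] unfolding F'_def by (simp add: add.commute add.left_commute)
      show ?thesis
      proof (cases "l = 1")
        case True
        then have "length w = 4*l+4" using lenV_1 w_def by simp
        then have "qstate w ds (4*l+4) = []" using acc' by (simp add: accepting_def)
        then show ?thesis using qM by simp
      next
        case False
        then have l2: "2 \<le> l" using l by simp
        have N2: "8*l+4 \<le> length w" using lenV2[OF l2] w_def by simp
        have sC: "\<And>i. 4*l+4 \<le> i \<Longrightarrow> i < 6*l+4 \<Longrightarrow> w!i = (if i = 4*l+4 then C1 else if i \<le> 5*l+3 then X else if i \<le> 6*l+2 then Y else C2)"
        proof -
          fix i assume i: "4*l+4 \<le> i" "i < 6*l+4"
          then have "w!i = vblk (l-1) ! (i-(4*l+4))" using wC[OF l2] w_def by simp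
          also have "\<dots> = (if i = 4*l+4 then C1 else if i \<le> 5*l+3 then X else if i \<le> 6*l+2 then Y else C2)"
            using i l2 by (subst vblk_nth) auto
          finally show "w!i = (if i = 4*l+4 then C1 else if i \<le> 5*l+3 then X else if i \<le> 6*l+2 then Y else C2)" .
        qed
        have sD: "\<And>i. 6*l+4 \<le> i \<Longrightarrow> i < 8*l+4 \<Longrightarrow> w!i = (if i = 6*l+4 then C1 else if i \<le> 7*l+3 then X else if i \<le> 8*l+2 then Y else C2)"
        proof -
          fix i assume i: "6*l+4 \<le> i" "i < 8*l+4"
          then have "w!i = vblk (l-1) ! (i-(6*l+4))" using wD[OF l2] w_def by simp
          also have "\<dots> = (if i = 6*l+4 then C1 else if i \<le> 7*l+3 then X else if i \<le> 8*l+2 then Y else C2)"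
            using i l2 by (subst vblk_nth) auto
          finally show "w!i = (if i = 6*l+4 then C1 else if i \<le> 7*l+3 then X else if i \<le> 8*l+2 then Y else C2)" .
        qed
        have hsym: "w!(l+1+b) = Y \<or> w!(l+1+b) = C2" using sA[of "l+1+b"] b(1) by auto
        have qM': "qstate w ds (4*l+4) = (l+1+b) # ([l+2+b..<2*l+2] @ F' @ [4*l+3])"
          using qM unfolding uc by simp
        have q5: "qstate w ds (4*l+4 + l) = (l+1+b) # ([l+2+b..<2*l+2] @ F' @ [4*l+3]) @ [4*l+4..<4*l+4+l]"
          by (rule front_stays[OF acc' qM']) (use N2 sC hsym in auto)
        have uc2: "[l+1+b..<2*l+2] = [l+1+b..<2*l+1] @ [2*l+1]" using b(1) by (simp add: upt_Suc)
        have q5': "qstate w ds (5*l+4) = [l+1+b..<2*l+1] @ [2*l+1] @ (F' @ [4*l+3] @ [4*l+4..<5*l+4])"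
        proof -
          have "qstate w ds (5*l+4) = [l+1+b..<2*l+2] @ (F' @ [4*l+3]) @ [4*l+4..<5*l+4]"
            using q5 unfolding uc by (simp add: add.commute add.left_commute)
          then show ?thesis unfolding uc2 by simp
        qed
        obtain R1' G where yp: "qstate w ds (5*l+4 + (l-1)) = R1' @ [2*l+1] @ (F' @ [4*l+3] @ [4*l+4..<5*l+4]) @ G"
            "set R1' \<subseteq> set [l+1+b..<2*l+1]"
          using yphase[OF acc' q5', of "l-1" "l-1"] N2 sA[of "2*l+1"] sC l2 by auto
        have e6: "5*l+4 + (l-1) = 6*l+3" using l2 by simp
        have q6: "qstate w ds (6*l+3) = (R1' @ [2*l+1]) @ (F' @ [4*l+3]) @ [4*l+4..<5*l+4] @ G"
          using yp(1) unfolding e6 by simp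
        have goodR1: "\<forall>r \<in> set (R1' @ [2*l+1]) \<union> set (F' @ [4*l+3]). w!r = Y \<or> w!r = C2"
        proof
          fix r assume r: "r \<in> set (R1' @ [2*l+1]) \<union> set (F' @ [4*l+3])"
          have "set F' \<subseteq> {3*l+3..<4*l+3}" unfolding F'_def by auto
          then consider "r \<in> {l+1+b..<2*l+1}" | "r = 2*l+1" | "r \<in> {3*l+3..<4*l+3}" | "r = 4*l+3"
            using r yp(2) by auto
          then show "w!r = Y \<or> w!r = C2"
          proof cases
            case 1 then show ?thesis using sA[of r] by auto
          next
            case 2 then show ?thesis using sA[of r] by auto
          next
            case 3 then show ?thesis using sB[of r] by auto
          next
            case 4 then show ?thesis using sB[of r] by auto
          qed
        qed
        obtain R G' where RG: "qstate w ds (6*l+4) = R @ [4*l+4..<5*l+4] @ G'" "R \<noteq> []"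
            "\<forall>r \<in> set R. w!r = Y \<or> w!r = C2"
        proof (cases "ds!(6*l+3)")
          case True
          have eq: "qstate w ds (6*l+4) = ((R1' @ [2*l+1]) @ (F' @ [4*l+3])) @ [4*l+4..<5*l+4] @ (G @ [6*l+3])"
            using qs_step'[of "6*l+4" "6*l+3" w ds] True q6 by simp
          show ?thesis by (rule that[OF eq]) (use goodR1 in auto)
        next
          case False
          have eq: "qstate w ds (6*l+4) = (tl (R1' @ [2*l+1]) @ (F' @ [4*l+3])) @ [4*l+4..<5*l+4] @ G"
            using qs_step'[of "6*l+4" "6*l+3" w ds] False q6 by (cases R1') simp_all
          have sub: "set (tl (R1' @ [2*l+1])) \<subseteq> set (R1' @ [2*l+1])" by (metis list.set_sel(2) subsetI tl_Nil)
          show ?thesis by (rule that[OF eq]) (use goodR1 sub in auto)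
        qed
        obtain r R' where rR: "R = r # R'" using RG(2) by (cases R) auto
        have q7: "qstate w ds (6*l+4 + l) = r # (R' @ [4*l+4..<5*l+4] @ G') @ [6*l+4..<6*l+4+l]"
          by (rule front_stays[OF acc']) (use RG rR N2 sD in auto)
        have xb2: "xblock l 2 = {4*l+5..<4*l+5+(l-1)}" unfolding xblock_def fstart2[OF l] by (simp add: add.commute)
        have xb3: "xblock l 3 = {6*l+5..<6*l+5+(l-1)}" unfolding xblock_def fstart3[OF l2] by (simp add: add.commute)
        have "xblock l 2 \<subseteq> set (qstate w ds (7*l+4)) \<and> xblock l 3 \<subseteq> set (qstate w ds (7*l+4))"
        proof -
          have "qstate w ds (7*l+4) = r # (R' @ [4*l+4..<5*l+4] @ G') @ [6*l+4..<7*l+4]"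
            using q7 by (simp add: add.commute add.left_commute)
          then show ?thesis unfolding xb2 xb3 using l2 by auto
        qed
        then show ?thesis using l2 N2 unfolding w_def[symmetric]
          by (intro exI[of _ "7*l+4"] conjI exI[of _ 2] exI[of _ 3]) auto
      qed
    qed
  qed
qed

end
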